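(* Let $f\in C^2(\mathbb{R}^d)$, $\gamma:\mathbb{R}_+\to\mathbb{R}_+$ continuous with $c\le\gamma(t)\le C$ ($0<c\le C$), $0<\beta<\frac{2c}{C^2}$, and let $x\in C^2([0,T[;\mathbb{R}^d)$ solve $\ddot x+\gamma(t)\dot x+\nabla f(x+\beta\dot x)=0$ on $[0,T[$. Define $V(t)=f(x(t)+\beta\dot x(t))+\frac12\|\dot x(t)\|^2$. Then for all $t\in[0,T[$, $$V'(t)\le-\delta_1\big(\|\dot x(t)\|^2+\|\nabla f(x(t)+\beta\dot x(t))\|^2\big),\qquad \delta_1=\min\Big(\frac c2,\ \beta\Big(1-\frac{\beta C^2}{2c}\Big)\Big)>0.$$ *)

theory Defs
  imports "HOL-Analysis.Analysis"
begin

end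

theory Submission
  imports Defs
begin

theorem mainTheorem11:
  fixes f :: "'a::euclidean_space \<Rightarrow> real"
    and g :: "'a \<Rightarrow> 'a"
    and G' :: "'a \<Rightarrow> 'a \<Rightarrow>\<^sub>L 'a"
    and \<gamma> :: "real \<Rightarrow> real"
    and c C \<beta> :: real
    and T :: ereal
    and x x' x'' :: "real \<Rightarrow> 'a"
  assumes grad: "\<And>y. (f has_derivative (\<lambda>h. g y \<bullet> h)) (at y)"
    and hess: "\<And>y. (g has_derivative blinfun_apply (G' y)) (at y)"
    and hess_cont: "continuous_on UNIV G'"
    and gamma_cont: "continuous_on {0..} \<gamma>"
    and gamma_bounds: "\<And>t. t \<ge> 0 \<Longrightarrow> c \<le> \<gamma> t \<and> \<gamma> t \<le> C"
    and c_pos: "0 < c" and cC: "c \<le> C"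
    and beta_pos: "0 < \<beta>" and beta_bound: "\<beta> < 2 * c / C\<^sup>2"
    and T_pos: "T > 0"
    and dx: "\<And>t. t \<in> {s. 0 \<le> s \<and> ereal s < T} \<Longrightarrow>
               (x has_vector_derivative x' t) (at t within {s. 0 \<le> s \<and> ereal s < T})"
    and ddx: "\<And>t. t \<in> {s. 0 \<le> s \<and> ereal s < T} \<Longrightarrow>
               (x' has_vector_derivative x'' t) (at t within {s. 0 \<le> s \<and> ereal s < T})"
    and ddx_cont: "continuous_on {s. 0 \<le> s \<and> ereal s < T} x''"
    and ode: "\<And>t. t \<in> {s. 0 \<le> s \<and> ereal s < T} \<Longrightarrow>
               x'' t + \<gamma> t *\<^sub>R x' t + g (x t + \<beta> *\<^sub>R x' t) = 0"
  shows "min (c / 2) (\<beta> * (1 - \<beta> * C\<^sup>2 / (2 * c))) > 0 \<and>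
    (\<forall>t \<in> {s. 0 \<le> s \<and> ereal s < T}. \<exists>D.
       ((\<lambda>s. f (x s + \<beta> *\<^sub>R x' s) + (1/2) * (norm (x' s))\<^sup>2)
          has_real_derivative D) (at t within {s. 0 \<le> s \<and> ereal s < T}) \<and>
       D \<le> - min (c / 2) (\<beta> * (1 - \<beta> * C\<^sup>2 / (2 * c))) *
              ((norm (x' t))\<^sup>2 + (norm (g (x t + \<beta> *\<^sub>R x' t)))\<^sup>2))"
proof -
  define S where "S = {s. 0 \<le> s \<and> ereal s < T}"
  define \<delta> where "\<delta> = min (c / 2) (\<beta> * (1 - \<beta> * C\<^sup>2 / (2 * c)))"
  have C_pos: "C > 0" using c_pos cC by linarith
  have bC: "\<beta> * C\<^sup>2 < 2 * c" using beta_bound C_pos by (simp add: field_simps)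
  have dpos: "\<delta> > 0" unfolding \<delta>_def using c_pos beta_pos bC
    by (auto simp: field_simps)
  have main: "\<exists>D. ((\<lambda>s. f (x s + \<beta> *\<^sub>R x' s) + (1/2) * (norm (x' s))\<^sup>2)
          has_real_derivative D) (at t within S) \<and>
       D \<le> - \<delta> * ((norm (x' t))\<^sup>2 + (norm (g (x t + \<beta> *\<^sub>R x' t)))\<^sup>2)"
    if tS: "t \<in> S" for t
  proof -
    define u where "u = x' t"
    define y where "y = x t + \<beta> *\<^sub>R x' t"
    define w where "w = g y"
    define \<gamma>t where "\<gamma>t = \<gamma> t"
    have t0: "t \<ge> 0" using tS unfolding S_def by auto
    have gb: "c \<le> \<gamma>t" "\<gamma>t \<le> C" using gamma_bounds[OF t0] unfolding \<gamma>t_def by auto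
    have x2: "x'' t = - \<gamma>t *\<^sub>R u - w" using ode[OF tS[unfolded S_def]]
      unfolding u_def w_def y_def \<gamma>t_def by (simp add: algebra_simps eq_neg_iff_add_eq_0)
    have yd: "((\<lambda>s. x s + \<beta> *\<^sub>R x' s) has_vector_derivative (u + \<beta> *\<^sub>R x'' t)) (at t within S)"
      unfolding u_def using dx[OF tS[unfolded S_def]] ddx[OF tS[unfolded S_def]] S_def
      by (auto intro!: derivative_eq_intros)
    have fd: "((\<lambda>s. f (x s + \<beta> *\<^sub>R x' s)) has_real_derivative (w \<bullet> (u + \<beta> *\<^sub>R x'' t))) (at t within S)"
    proof -
      have "((\<lambda>s. f (x s + \<beta> *\<^sub>R x' s)) has_derivative (\<lambda>h. g y \<bullet> (h *\<^sub>R (u + \<beta> *\<^sub>R x'' t)))) (at t within S)"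
        using has_derivative_compose[OF yd[unfolded has_vector_derivative_def] grad[of "x t + \<beta> *\<^sub>R x' t"]]
        unfolding y_def by (simp add: o_def)
      then show ?thesis unfolding has_field_derivative_def w_def
        by (rule has_derivative_eq_rhs) (auto simp: fun_eq_iff inner_scaleR_right mult.commute)
    qed
    have nd: "((\<lambda>s. (1/2) * (norm (x' s))\<^sup>2) has_real_derivative (u \<bullet> x'' t)) (at t within S)"
    proof -
      have "((\<lambda>s. x' s \<bullet> x' s) has_derivative (\<lambda>h. x' t \<bullet> (h *\<^sub>R x'' t) + (h *\<^sub>R x'' t) \<bullet> x' t)) (at t within S)"
        using has_derivative_inner[OF ddx[OF tS[unfolded S_def], unfolded has_vector_derivative_def, folded S_def]
             ddx[OF tS[unfolded S_def], unfolded has_vector_derivative_def, folded S_def]] by simp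
      then have "((\<lambda>s. x' s \<bullet> x' s) has_real_derivative (2 * (u \<bullet> x'' t))) (at t within S)"
        unfolding has_field_derivative_def u_def
        by (rule has_derivative_eq_rhs) (auto simp: fun_eq_iff inner_commute)
      then have "((\<lambda>s. (1/2) * (x' s \<bullet> x' s)) has_real_derivative ((1/2) * (2 * (u \<bullet> x'' t)))) (at t within S)"
        by (rule DERIV_cmult)
      then show ?thesis by (simp add: power2_norm_eq_inner)
    qed
    define D where "D = w \<bullet> (u + \<beta> *\<^sub>R x'' t) + u \<bullet> x'' t"
    have der: "((\<lambda>s. f (x s + \<beta> *\<^sub>R x' s) + (1/2) * (norm (x' s))\<^sup>2) has_real_derivative D) (at t within S)"
      unfolding D_def using DERIV_add[OF fd nd] by simp
    have Deq: "D = - \<beta> * \<gamma>t * (w \<bullet> u) - \<beta> * (w \<bullet> w) - \<gamma>t * (u \<bullet> u)"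
      unfolding D_def x2 by (simp add: algebra_simps inner_commute)
    have cs: "\<bar>w \<bullet> u\<bar> \<le> norm w * norm u" by (rule Cauchy_Schwarz_ineq2)
    have nw: "w \<bullet> w = (norm w)\<^sup>2" "u \<bullet> u = (norm u)\<^sup>2" by (simp_all add: power2_norm_eq_inner)
    have "\<beta> * \<gamma>t * (w \<bullet> u) \<ge> - (\<gamma>t/2 * (norm u)\<^sup>2 + \<beta>\<^sup>2 * \<gamma>t / 2 * (norm w)\<^sup>2)"
    proof -
      have "\<beta> * \<gamma>t * (w \<bullet> u) \<ge> - (\<beta> * \<gamma>t * (norm w * norm u))"
        using cs beta_pos gb c_pos
        by (smt (verit, best) mult_nonneg_nonneg mult_left_mono abs_le_iff mult_minus_right)
      moreover have "\<beta> * \<gamma>t * (norm w * norm u) \<le> \<gamma>t/2 * (norm u)\<^sup>2 + \<beta>\<^sup>2 * \<gamma>t / 2 * (norm w)\<^sup>2"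
      proof -
        have "0 \<le> \<gamma>t/2 * (norm u - \<beta> * norm w)\<^sup>2" using gb c_pos by auto
        then show ?thesis by (simp add: power2_eq_square algebra_simps)
      qed
      ultimately show ?thesis by linarith
    qed
    then have D1: "D \<le> - (\<gamma>t/2) * (norm u)\<^sup>2 - \<beta> * (1 - \<beta> * \<gamma>t / 2) * (norm w)\<^sup>2"
      unfolding Deq nw by (simp add: algebra_simps power2_eq_square)
    have "\<gamma>t \<le> C\<^sup>2 / c"
    proof -
      have "\<gamma>t * c \<le> C * C" using gb c_pos by (meson cC mult_mono order_trans less_imp_le)
      then show ?thesis using c_pos by (simp add: field_simps power2_eq_square)
    qed
    then have "\<beta> * \<gamma>t / 2 \<le> \<beta> * C\<^sup>2 / (2 * c)" using beta_pos c_pos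
      by (simp add: field_simps)
    then have h2: "\<beta> * (1 - \<beta> * C\<^sup>2 / (2 * c)) \<le> \<beta> * (1 - \<beta> * \<gamma>t / 2)"
      using beta_pos by (simp add: mult_left_mono)
    have "\<delta> \<le> \<gamma>t/2" "\<delta> \<le> \<beta> * (1 - \<beta> * \<gamma>t / 2)" unfolding \<delta>_def using gb h2 by auto
    then have "\<delta> * ((norm u)\<^sup>2 + (norm w)\<^sup>2) \<le> (\<gamma>t/2) * (norm u)\<^sup>2 + \<beta> * (1 - \<beta> * \<gamma>t / 2) * (norm w)\<^sup>2"
      proof -
        assume a: "\<delta> \<le> \<gamma>t/2" "\<delta> \<le> \<beta> * (1 - \<beta> * \<gamma>t / 2)"
        have "\<delta> * (norm u)\<^sup>2 \<le> (\<gamma>t/2) * (norm u)\<^sup>2" using a(1) by (rule mult_right_mono) simp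
        moreover have "\<delta> * (norm w)\<^sup>2 \<le> \<beta> * (1 - \<beta> * \<gamma>t / 2) * (norm w)\<^sup>2" using a(2) by (rule mult_right_mono) simp
        ultimately show ?thesis by (simp add: distrib_left)
      qed
    then have "D \<le> - \<delta> * ((norm u)\<^sup>2 + (norm w)\<^sup>2)" using D1 by linarith
    then show ?thesis using der unfolding u_def w_def y_def by blast
  qed
  show ?thesis using dpos main unfolding \<delta>_def S_def by blast
qed

end
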